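(* Assume the standing setup. If $\lambda_1(\boldsymbol\Omega_K)>1$, then $\mathbf 0_K\prec\mathbf g(1)\prec\mathbf 1_K$.
   Context: Standing setup: $K\ge1$, $\boldsymbol\rho=(\rho_k)$ with $\rho_k\in(0,1)$, $\sum\rho_k=1$; $\mathbf S_K=(s_{kl})$ symmetric with $s_{kl}>0$; $\mathbf D_{\mathbf v}$ diagonal with diagonal $\mathbf v$; $\boldsymbol\Omega_K=\mathbf D_{\boldsymbol\rho^{\odot1/2}}\mathbf S_K\mathbf D_{\boldsymbol\rho^{\odot1/2}}$, $\boldsymbol\Gamma_K=\mathbf S_K\mathbf D_{\boldsymbol\rho}$; $\lambda_1$ = largest eigenvalue. For each $N$, $[N]$ is split into consecutive blocks $B_k$ with $|B_k|/N\to\rho_k$; $\Sigma_{ij}=s_{kl}$ for $i\in B_k,j\in B_l$; $\mathbf H$ symmetric with independent standard Gaussian entries on/above the diagonal; $\mathbf X=\mathbf H\odot\boldsymbol\Sigma^{\odot1/2}-N^{-1/2}\mathrm{Diag}(\boldsymbol\Sigma\mathbf 1)$; $\mu_X$ the a.s. limiting spectral distribution of $\mathbf X/\sqrt N$. QVE: for $z\in\mathbb H_-=\{\Im z<0\}$, $\mathbf g(z)$ is the unique solution in $(\mathbb H_+)^K$ of $\mathbf 1_K=z\mathbf g-\mathbf g\odot\boldsymbol\Gamma_K(\mathbf g-\mathbf 1_K)$, $\sum_k\rho_kg_k$ being the Stieltjes transform of $\mu_X$; $\mathbf g$ extends continuously to $\mathbb H_-\cup\mathbb R$, analytically off $\mathrm{Supp}(\mu_X)$,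 and $\mathbf g(1)$ is the value of this extension at $1$. $\prec$ is entrywise strict inequality. *)

theory Defs
  imports "HOL-Analysis.Analysis"
begin

text \<open>Omega_K = D_{rho^{1/2}} S_K D_{rho^{1/2}}, entrywise sqrt(rho_k) s_kl sqrt(rho_l).\<close>
definition Omega_mat :: "real^'k::finite \<Rightarrow> real^'k^'k \<Rightarrow> real^'k^'k" where
  "Omega_mat rho S = (\<chi> k l. sqrt (rho $ k) * S $ k $ l * sqrt (rho $ l))"

text \<open>Gamma_K = S_K D_rho, entrywise s_kl rho_l.\<close>
definition Gamma_mat :: "real^'k::finite \<Rightarrow> real^'k^'k \<Rightarrow> real^'k^'k" where
  "Gamma_mat rho S = (\<chi> k l. S $ k $ l * rho $ l)"

definition lambda_max :: "real^'k::finite^'k \<Rightarrow> real" where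
  "lambda_max A = Max {l. \<exists>v. v \<noteq> 0 \<and> A *v v = l *\<^sub>R v}"

definition QVE :: "real^'k::finite \<Rightarrow> real^'k^'k \<Rightarrow> complex \<Rightarrow> complex^'k \<Rightarrow> bool" where
  "QVE rho S z g \<longleftrightarrow>
     (\<forall>k. 1 = z * g $ k - g $ k * (\<Sum>l\<in>UNIV. complex_of_real (Gamma_mat rho S $ k $ l) * (g $ l - 1)))"

end

theory Submission
  imports Defs
begin


lemma mv_sym_inner:
  fixes A :: "real^'k::finite^'k"
  assumes sym: "\<And>i j. A$i$j = A$j$i"
  shows "inner (A *v x) y = inner x (A *v y)"
proof -
  have "inner (A *v x) y = (\<Sum>i\<in>UNIV. (\<Sum>j\<in>UNIV. A$i$j * x$j) * y$i)"
    by (simp add: inner_vec_def matrix_vector_mult_def)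
  also have "\<dots> = (\<Sum>i\<in>UNIV. \<Sum>j\<in>UNIV. A$i$j * x$j * y$i)"
    by (simp add: sum_distrib_right)
  also have "\<dots> = (\<Sum>j\<in>UNIV. \<Sum>i\<in>UNIV. A$i$j * x$j * y$i)"
    by (rule sum.swap)
  also have "\<dots> = (\<Sum>j\<in>UNIV. x$j * (\<Sum>i\<in>UNIV. A$j$i * y$i))"
    by (simp add: sum_distrib_left sym mult_ac)
  also have "\<dots> = inner x (A *v y)"
    by (simp add: inner_vec_def matrix_vector_mult_def)
  finally show ?thesis .
qed

lemma eig_finite:
  fixes A :: "real^'k::finite^'k"
  assumes sym: "\<And>i j. A$i$j = A$j$i"
  shows "finite {l. \<exists>v. v \<noteq> 0 \<and> A *v v = l *\<^sub>R v}"
proof -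
  define L where "L = {l. \<exists>v. v \<noteq> 0 \<and> A *v v = l *\<^sub>R v}"
  define V where "V = (\<lambda>l. SOME v. v \<noteq> 0 \<and> A *v v = l *\<^sub>R v)"
  have V: "V l \<noteq> 0 \<and> A *v V l = l *\<^sub>R V l" if "l \<in> L" for l
    using that unfolding L_def V_def by (rule CollectE) (rule someI_ex)
  have inj: "inj_on V L"
  proof (rule inj_onI)
    fix l1 l2 assume "l1 \<in> L" "l2 \<in> L" "V l1 = V l2"
    then have "l1 *\<^sub>R V l1 = l2 *\<^sub>R V l1" using V by metis
    then have "(l1 - l2) *\<^sub>R V l1 = 0" by (simp add: algebra_simps)
    then show "l1 = l2" using V \<open>l1 \<in> L\<close> by auto
  qed
  have orth: "pairwise orthogonal (V ` L)"
  proof (auto simp: pairwise_def)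
    fix l1 l2 assume h: "l1 \<in> L" "l2 \<in> L" "V l1 \<noteq> V l2"
    then have ne: "l1 \<noteq> l2" by auto
    have "l1 * inner (V l1) (V l2) = inner (A *v V l1) (V l2)" using V[OF h(1)] by simp
    also have "\<dots> = inner (V l1) (A *v V l2)" by (rule mv_sym_inner[OF sym])
    also have "\<dots> = l2 * inner (V l1) (V l2)" using V[OF h(2)] by simp
    finally have "(l1 - l2) * inner (V l1) (V l2) = 0" by (simp add: algebra_simps)
    then show "orthogonal (V l1) (V l2)" using ne by (simp add: orthogonal_def)
  qed
  have "0 \<notin> V ` L" using V by auto
  then have "independent (V ` L)" using orth pairwise_orthogonal_independent by blast
  then have "finite (V ` L)" using independent_imp_finite by blast
  then show ?thesis using inj finite_imageD unfolding L_def by blast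
qed


lemma eig_exists:
  fixes A :: "real^'k::finite^'k"
  assumes pos: "\<And>i j. 0 < A$i$j"
  shows "\<exists>l v. v \<noteq> 0 \<and> A *v v = l *\<^sub>R v"
proof -
  define S where "S = {x::real^'k. (\<forall>k. 0 \<le> x$k) \<and> sum (\<lambda>k. x$k) UNIV = 1}"
  define D where "D = (\<lambda>x::real^'k. \<Sum>i\<in>UNIV. \<Sum>j\<in>UNIV. A$i$j * x$j)"
  define f where "f = (\<lambda>x::real^'k. \<chi> i. (\<Sum>j\<in>UNIV. A$i$j * x$j) / D x)"
  have rowpos: "0 < (\<Sum>j\<in>UNIV. A$i$j * x$j)" if "x \<in> S" for x i
  proof -
    have nn: "\<forall>j. 0 \<le> A$i$j * x$j" using that pos unfolding S_def
      by (simp add: less_imp_le)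
    have "\<exists>j. x$j \<noteq> 0"
    proof (rule ccontr)
      assume "\<not> (\<exists>j. x$j \<noteq> 0)"
      then have "sum (\<lambda>k. x$k) UNIV = 0" by simp
      then show False using that unfolding S_def by simp
    qed
    then obtain j where "x$j \<noteq> 0" by blast
    moreover have "0 \<le> x$j" using that unfolding S_def by blast
    ultimately have "0 < x$j" by linarith
    then have "0 < A$i$j * x$j" using pos by simp
    also have "\<dots> \<le> (\<Sum>j\<in>UNIV. A$i$j * x$j)"
      by (rule member_le_sum) (use nn in auto)
    finally show ?thesis .
  qed
  have Dpos: "0 < D x" if "x \<in> S" for x
    unfolding D_def by (rule sum_pos) (use rowpos that in auto)
  have cS: "compact S"
  proof (subst compact_eq_bounded_closed, rule conjI)
    show "bounded S" unfolding bounded_iff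
    proof (intro exI ballI)
      fix x assume "x \<in> S"
      have "norm x \<le> sum (\<lambda>i. \<bar>x$i\<bar>) UNIV" by (rule norm_le_l1_cart)
      also have "\<dots> = sum (\<lambda>i. x$i) UNIV" using \<open>x \<in> S\<close> unfolding S_def by simp
      also have "\<dots> = 1" using \<open>x \<in> S\<close> unfolding S_def by simp
      finally show "norm x \<le> 1" .
    qed
    have "S = (\<Inter>k. {x. 0 \<le> x$k}) \<inter> {x. sum (\<lambda>k. x$k) UNIV = 1}"
      unfolding S_def by auto
    also have "closed \<dots>"
      by (intro closed_Int closed_INT ballI closed_Collect_le closed_Collect_eq continuous_intros)
    finally show "closed S" .
  qed
  have cvS: "convex S"
    unfolding convex_def
  proof (intro ballI allI impI)
    fix x y :: "real^'k" and u v :: real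
    assume xy: "x \<in> S" "y \<in> S" and uv: "0 \<le> u" "0 \<le> v" "u + v = 1"
    have "\<forall>k. 0 \<le> (u *\<^sub>R x + v *\<^sub>R y) $ k" using xy uv unfolding S_def by simp
    moreover have "sum (\<lambda>k. (u *\<^sub>R x + v *\<^sub>R y) $ k) UNIV = u * sum (\<lambda>k. x$k) UNIV + v * sum (\<lambda>k. y$k) UNIV"
      by (simp add: sum.distrib sum_distrib_left)
    ultimately show "u *\<^sub>R x + v *\<^sub>R y \<in> S" using xy uv unfolding S_def by simp
  qed
  have neS: "S \<noteq> {}"
  proof -
    have "(\<chi> k. 1 / real CARD('k)) \<in> S" unfolding S_def by simp
    then show ?thesis by blast
  qed
  have cf: "continuous_on S f"
    unfolding f_def D_def
    by (intro continuous_intros) (use Dpos[unfolded D_def] in force)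
  have fS: "f \<in> S \<rightarrow> S"
  proof
    fix x assume x: "x \<in> S"
    have "\<forall>k. 0 \<le> f x $ k" using rowpos[OF x] Dpos[OF x] unfolding f_def by (simp add: less_imp_le)
    moreover have "sum (\<lambda>k. f x $ k) UNIV = 1"
      using Dpos[OF x] unfolding f_def D_def by (simp add: sum_divide_distrib[symmetric])
    ultimately show "f x \<in> S" unfolding S_def by simp
  qed
  obtain x where x: "x \<in> S" "f x = x" using brouwer[OF cS cvS neS cf fS] by blast
  have "x \<noteq> 0" using x(1) unfolding S_def by auto
  moreover have "A *v x = D x *\<^sub>R x"
  proof -
    have "(A *v x) $ i = D x * x $ i" for i
    proof -
      have "x $ i = (\<Sum>j\<in>UNIV. A$i$j * x$j) / D x" using x(2) unfolding f_def
        by (metis vec_lambda_beta)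
      then show ?thesis using Dpos[OF x(1)] by (simp add: matrix_vector_mult_def field_simps)
    qed
    then show ?thesis by (simp add: vec_eq_iff)
  qed
  ultimately show ?thesis by blast
qed


lemma sym_swap:
  fixes rho :: "real^'k::finite" and S :: "real^'k^'k" and x y :: "'k \<Rightarrow> real"
  assumes S_sym: "\<And>k l. S$k$l = S$l$k"
  shows "(\<Sum>k\<in>UNIV. rho$k * x k * (\<Sum>l\<in>UNIV. S$k$l * rho$l * y l))
       = (\<Sum>k\<in>UNIV. rho$k * y k * (\<Sum>l\<in>UNIV. S$k$l * rho$l * x l))"
proof -
  have "(\<Sum>k\<in>UNIV. rho$k * x k * (\<Sum>l\<in>UNIV. S$k$l * rho$l * y l))
      = (\<Sum>k\<in>UNIV. \<Sum>l\<in>UNIV. rho$k * x k * (S$k$l * rho$l * y l))"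
    by (simp add: sum_distrib_left)
  also have "\<dots> = (\<Sum>l\<in>UNIV. \<Sum>k\<in>UNIV. rho$k * x k * (S$k$l * rho$l * y l))"
    by (rule sum.swap)
  also have "\<dots> = (\<Sum>l\<in>UNIV. rho$l * y l * (\<Sum>k\<in>UNIV. S$l$k * rho$k * x k))"
    by (simp add: sum_distrib_left S_sym mult_ac)
  finally show ?thesis .
qed

lemma amgm_term:
  fixes x y b b' :: real
  assumes "0 < b" "0 < b'"
  shows "x * y \<le> (x^2 * b' / b + y^2 * b / b') / 2"
proof -
  have "0 \<le> (x*b' - y*b)^2" by simp
  then have "0 \<le> (x*b' - y*b)^2 / (2*b*b')" using assms by simp
  also have "(x*b' - y*b)^2 / (2*b*b') = (x^2 * b' / b + y^2 * b / b') / 2 - x * y"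
    using assms by (simp add: field_simps power2_eq_square)
  finally show ?thesis by simp
qed

lemma amgm_form:
  fixes rho :: "real^'k::finite" and S :: "real^'k^'k" and b c w :: "'k \<Rightarrow> real"
  assumes S_sym: "\<And>k l. S$k$l = S$l$k"
    and S_nn: "\<And>k l. 0 \<le> S$k$l" and rho_nn: "\<And>k. 0 \<le> rho$k"
    and bpos: "\<And>k. 0 < b k"
    and hb: "\<And>k. (\<Sum>l\<in>UNIV. S$k$l * rho$l * b l) \<le> c k * b k"
  shows "(\<Sum>k\<in>UNIV. rho$k * w k * (\<Sum>l\<in>UNIV. S$k$l * rho$l * w l))
       \<le> (\<Sum>k\<in>UNIV. rho$k * c k * (w k)^2)"
proof -
  define M where "M = (\<lambda>k l. rho$k * S$k$l * rho$l)"
  have Mnn: "0 \<le> M k l" for k l unfolding M_def using S_nn rho_nn by simp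
  have Msym: "M k l = M l k" for k l unfolding M_def using S_sym by simp
  have "(\<Sum>k\<in>UNIV. rho$k * w k * (\<Sum>l\<in>UNIV. S$k$l * rho$l * w l))
      = (\<Sum>k\<in>UNIV. \<Sum>l\<in>UNIV. M k l * (w k * w l))"
    by (simp add: sum_distrib_left M_def mult_ac)
  also have "\<dots> \<le> (\<Sum>k\<in>UNIV. \<Sum>l\<in>UNIV. M k l * (((w k)^2 * b l / b k + (w l)^2 * b k / b l) / 2))"
    by (intro sum_mono mult_left_mono amgm_term bpos Mnn)
  also have "\<dots> = ((\<Sum>k\<in>UNIV. \<Sum>l\<in>UNIV. M k l * ((w k)^2 * b l / b k))
                  + (\<Sum>k\<in>UNIV. \<Sum>l\<in>UNIV. M k l * ((w l)^2 * b k / b l))) / 2"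
    by (simp add: sum.distrib add_divide_distrib sum_divide_distrib distrib_left)
  also have "(\<Sum>k\<in>UNIV. \<Sum>l\<in>UNIV. M k l * ((w l)^2 * b k / b l))
           = (\<Sum>k\<in>UNIV. \<Sum>l\<in>UNIV. M k l * ((w k)^2 * b l / b k))"
    by (subst sum.swap) (simp add: Msym)
  also have "((\<Sum>k\<in>UNIV. \<Sum>l\<in>UNIV. M k l * ((w k)^2 * b l / b k))
                  + (\<Sum>k\<in>UNIV. \<Sum>l\<in>UNIV. M k l * ((w k)^2 * b l / b k))) / 2
           = (\<Sum>k\<in>UNIV. rho$k * ((w k)^2 / b k) * (\<Sum>l\<in>UNIV. S$k$l * rho$l * b l))"
    by (simp add: sum_distrib_left M_def mult_ac)
  also have "\<dots> \<le> (\<Sum>k\<in>UNIV. rho$k * ((w k)^2 / b k) * (c k * b k))"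
    by (intro sum_mono mult_left_mono hb mult_nonneg_nonneg rho_nn divide_nonneg_pos bpos) simp
  also have "\<dots> = (\<Sum>k\<in>UNIV. rho$k * c k * (w k)^2)"
  proof (intro sum.cong refl)
    fix k
    have "b k \<noteq> 0" using bpos[of k] by simp
    then show "rho$k * ((w k)^2 / b k) * (c k * b k) = rho$k * c k * (w k)^2"
      by (simp add: field_simps)
  qed
  finally show ?thesis .
qed


lemma qve_parts:
  fixes rho :: "real^'k::finite" and S :: "real^'k^'k" and h :: "complex^'k"
  assumes "QVE rho S z h"
  shows "h$k \<noteq> 0"
    and "(\<Sum>l\<in>UNIV. S$k$l * rho$l * Im (h$l)) = Im z + Im (h$k) / (cmod (h$k))^2"
    and "(\<Sum>l\<in>UNIV. S$k$l * rho$l * (Re (h$l) - 1)) = Re z - Re (h$k) / (cmod (h$k))^2"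
proof -
  define T where "T = (\<Sum>l\<in>UNIV. complex_of_real (Gamma_mat rho S $ k $ l) * (h $ l - 1))"
  have eq: "1 = h$k * (z - T)" using assms unfolding QVE_def T_def by (simp add: algebra_simps)
  then show nz: "h$k \<noteq> 0" by auto
  have inv: "z - T = inverse (h$k)" using eq nz by (simp add: field_simps)
  have ReT: "Re T = (\<Sum>l\<in>UNIV. S$k$l * rho$l * (Re (h$l) - 1))"
    unfolding T_def by (simp add: Gamma_mat_def)
  have ImT: "Im T = (\<Sum>l\<in>UNIV. S$k$l * rho$l * Im (h$l))"
    unfolding T_def by (simp add: Gamma_mat_def)
  have "Im z - Im T = - Im (h$k) / (cmod (h$k))^2"
    using arg_cong[OF inv, of Im] by (simp add: cmod_power2)
  then show "(\<Sum>l\<in>UNIV. S$k$l * rho$l * Im (h$l)) = Im z + Im (h$k) / (cmod (h$k))^2"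
    using ImT by simp
  have "Re z - Re T = Re (h$k) / (cmod (h$k))^2"
    using arg_cong[OF inv, of Re] by (simp add: cmod_power2)
  then show "(\<Sum>l\<in>UNIV. S$k$l * rho$l * (Re (h$l) - 1)) = Re z - Re (h$k) / (cmod (h$k))^2"
    using ReT by simp
qed

lemma nontriv: "at (1::complex) within {z. Im z < 0} \<noteq> bot"
proof -
  have "(1::complex) islimpt {z. Im z < 0}"
  proof (rule islimptI)
    fix T :: "complex set" assume T: "1 \<in> T" "open T"
    then obtain e where e: "e > 0" "ball 1 e \<subseteq> T" using open_contains_ball by blast
    define y where "y = 1 - \<i> * complex_of_real (e/2)"
    have "dist y 1 < e" using e by (simp add: y_def dist_norm norm_mult)
    then have "y \<in> T" using e by (auto simp: dist_commute)
    moreover have "Im y < 0" "y \<noteq> 1" using e by (auto simp: y_def complex_eq_iff)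
    ultimately show "\<exists>y\<in>{z. Im z < 0}. y \<in> T \<and> y \<noteq> 1" by blast
  qed
  then show ?thesis using trivial_limit_within by blast
qed

lemma ev_H: "eventually (\<lambda>z. Im z < 0) (at (1::complex) within {z. Im z < 0})"
  by (simp add: eventually_at_filter)



lemma sqrt_cancel: "0 < (p::real) \<Longrightarrow> p * (x / sqrt p) = sqrt p * x"
  by (metis less_imp_le real_div_sqrt times_divide_eq_left times_divide_eq_right mult.commute)

lemma eig_gt1:
  fixes rho :: "real^'k::finite" and S :: "real^'k^'k"
  assumes rho_pos: "\<And>k. 0 < rho $ k" and S_sym: "\<And>k l. S $ k $ l = S $ l $ k"
    and S_pos: "\<And>k l. 0 < S $ k $ l"
    and lam: "lambda_max (Omega_mat rho S) > 1"
  shows "\<exists>v l. v \<noteq> 0 \<and> Omega_mat rho S *v v = l *\<^sub>R v \<and> l > 1"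
proof -
  let ?A = "Omega_mat rho S"
  let ?L = "{l. \<exists>v. v \<noteq> 0 \<and> ?A *v v = l *\<^sub>R v}"
  have sym: "?A$i$j = ?A$j$i" for i j unfolding Omega_mat_def using S_sym by simp
  have pos: "0 < ?A$i$j" for i j unfolding Omega_mat_def using S_pos rho_pos by simp
  have fin: "finite ?L" by (rule eig_finite[OF sym])
  have ne: "?L \<noteq> {}" using eig_exists[OF pos] by blast
  have "lambda_max ?A \<in> ?L" unfolding lambda_max_def using Max_in[OF fin ne] .
  then show ?thesis using lam by blast
qed

theorem mainTheorem10:
  fixes rho :: "real^'k::finite" and S :: "real^'k^'k"
    and g :: "complex \<Rightarrow> complex^'k" and g1 :: "complex^'k"
  assumes rho_pos: "\<And>k. 0 < rho $ k" and rho_lt1: "\<And>k. rho $ k < 1"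
    and rho_sum: "(\<Sum>k\<in>UNIV. rho $ k) = 1"
    and S_sym: "\<And>k l. S $ k $ l = S $ l $ k"
    and S_pos: "\<And>k l. 0 < S $ k $ l"
    and g_sol: "\<And>z. Im z < 0 \<Longrightarrow> (\<forall>k. 0 < Im (g z $ k)) \<and> QVE rho S z (g z)"
    and g_uniq: "\<And>z h. Im z < 0 \<Longrightarrow> (\<forall>k. 0 < Im (h $ k)) \<Longrightarrow> QVE rho S z h \<Longrightarrow> h = g z"
    and g1_lim: "(g \<longlongrightarrow> g1) (at 1 within {z. Im z < 0})"
    and lam: "lambda_max (Omega_mat rho S) > 1"
  shows "\<forall>k. Im (g1 $ k) = 0 \<and> 0 < Re (g1 $ k) \<and> Re (g1 $ k) < 1"
proof -
  define F where "F = at (1::complex) within {z. Im z < 0}"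
  have Fnt: "F \<noteq> bot" using nontriv F_def by simp
  have evH: "eventually (\<lambda>z. Im z < 0) F" using ev_H F_def by simp
  have gk: "((\<lambda>z. g z $ k) \<longlongrightarrow> g1 $ k) F" for k using tendsto_vec_nth[OF g1_lim] F_def by simp
  have idl: "((\<lambda>z. z) \<longlongrightarrow> 1) F" unfolding F_def by (rule tendsto_ident_at)
  have S_nn: "0 \<le> S$k$l" for k l using S_pos[of k l] by simp
  have rho_nn: "0 \<le> rho$k" for k using rho_pos[of k] by simp
  have Q1: "QVE rho S 1 g1"
    unfolding QVE_def
  proof
    fix k
    let ?f = "\<lambda>z. z * g z $ k - g z $ k * (\<Sum>l\<in>UNIV. complex_of_real (Gamma_mat rho S $ k $ l) * (g z $ l - 1))"
    let ?R = "1 * g1 $ k - g1 $ k * (\<Sum>l\<in>UNIV. complex_of_real (Gamma_mat rho S $ k $ l) * (g1 $ l - 1))"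
    have "(?f \<longlongrightarrow> ?R) F"
      by (intro tendsto_intros idl gk)
    moreover have "eventually (\<lambda>z. ?f z = 1) F"
    proof (rule eventually_mono[OF evH])
      fix z :: complex assume "Im z < 0"
      then have "QVE rho S z (g z)" using g_sol by blast
      then show "?f z = 1" unfolding QVE_def by metis
    qed
    ultimately have "((\<lambda>z. 1) \<longlongrightarrow> ?R) F" by (rule Lim_transform_eventually)
    then have "1 = ?R" using tendsto_unique[OF Fnt tendsto_const] by blast
    then show "1 = 1 * g1 $ k - g1 $ k * (\<Sum>l\<in>UNIV. complex_of_real (Gamma_mat rho S $ k $ l) * (g1 $ l - 1))" .
  qed
  have Imnn: "0 \<le> Im (g1$k)" for k
  proof (rule tendsto_le[OF Fnt tendsto_Im[OF gk] tendsto_const])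
    show "eventually (\<lambda>z. 0 \<le> Im (g z $ k)) F"
      by (rule eventually_mono[OF evH]) (use g_sol less_imp_le in blast)
  qed
  have nz1: "g1$k \<noteq> 0" for k by (rule qve_parts(1)[OF Q1])
  define a where "a = (\<lambda>k. Re (g1$k))"
  define b where "b = (\<lambda>k. Im (g1$k))"
  define n where "n = (\<lambda>k. (cmod (g1$k))^2)"
  have npos: "0 < n k" for k using nz1[of k] unfolding n_def by simp
  have n_eq: "n k = (a k)^2 + (b k)^2" for k unfolding n_def a_def b_def by (simp add: cmod_power2)
  have Imeq: "(\<Sum>l\<in>UNIV. S$k$l * rho$l * b l) = b k / n k" for k
    using qve_parts(2)[OF Q1, of k] unfolding a_def b_def n_def by simp
  have Req: "(\<Sum>l\<in>UNIV. S$k$l * rho$l * (a l - 1)) = 1 - a k / n k" for k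
    using qve_parts(3)[OF Q1, of k] unfolding a_def b_def n_def by simp
  have b0: "b k = 0" for k
  proof -
    have s1: "(\<Sum>k\<in>UNIV. rho$k * b k * (\<Sum>l\<in>UNIV. S$k$l * rho$l * (a l - 1)))
        = (\<Sum>k\<in>UNIV. rho$k * (a k - 1) * (\<Sum>l\<in>UNIV. S$k$l * rho$l * b l))"
      by (rule sym_swap[OF S_sym])
    have "(\<Sum>k\<in>UNIV. rho$k * b k * ((1 - a k)^2 + (b k)^2) / n k)
        = (\<Sum>k\<in>UNIV. rho$k * b k * (1 - a k / n k) - rho$k * (a k - 1) * (b k / n k))"
    proof (intro sum.cong refl)
      fix k
      have nz: "n k \<noteq> 0" using npos[of k] by simp
      have e: "(1 - a k)^2 + (b k)^2 = n k - 2 * a k + 1"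
        by (simp add: n_eq power2_eq_square algebra_simps)
      have "rho$k * b k * (n k - 2 * a k + 1) / n k
          = rho$k * b k * (1 - a k / n k) - rho$k * (a k - 1) * (b k / n k)"
        using nz by (simp add: field_simps)
      then show "rho$k * b k * ((1 - a k)^2 + (b k)^2) / n k
          = rho$k * b k * (1 - a k / n k) - rho$k * (a k - 1) * (b k / n k)"
        by (simp only: e)
    qed
    also have "\<dots> = 0"
      using s1 by (simp add: sum_subtractf Imeq Req)
    finally have sum0: "(\<Sum>k\<in>UNIV. rho$k * b k * ((1 - a k)^2 + (b k)^2) / n k) = 0" .
    have tnn: "\<forall>k\<in>UNIV. 0 \<le> rho$k * b k * ((1 - a k)^2 + (b k)^2) / n k"
      using rho_nn Imnn npos unfolding b_def by (simp add: less_imp_le)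
    have "rho$k * b k * ((1 - a k)^2 + (b k)^2) / n k = 0"
    proof -
      have "\<forall>k\<in>UNIV. rho$k * b k * ((1 - a k)^2 + (b k)^2) / n k = 0"
        by (rule sum_nonneg_eq_0_iff[OF finite, THEN iffD1]) (use tnn sum0 in auto)
      then show ?thesis by simp
    qed
    then have "b k * ((1 - a k)^2 + (b k)^2) = 0" using rho_pos[of k] npos[of k] by simp
    then show "b k = 0" by (auto simp: add_nonneg_eq_0_iff)
  qed
  define r where "r = a"
  have rnz: "r k \<noteq> 0" for k using npos[of k] n_eq[of k] b0[of k] unfolding r_def by auto
  have nr: "n k = (r k)^2" for k using n_eq b0 unfolding r_def by simp
  define q where "q = (\<lambda>k. 1 - r k)"
  have Gq: "(\<Sum>l\<in>UNIV. S$k$l * rho$l * q l) = q k / r k" for k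
  proof -
    have "(\<Sum>l\<in>UNIV. S$k$l * rho$l * q l) = - (\<Sum>l\<in>UNIV. S$k$l * rho$l * (r l - 1))"
      unfolding q_def by (simp add: sum_negf[symmetric] algebra_simps)
    also have "\<dots> = a k / n k - 1" using Req[of k] unfolding r_def by simp
    also have "\<dots> = q k / r k" using rnz[of k] unfolding q_def nr r_def
      by (simp add: field_simps power2_eq_square)
    finally show ?thesis .
  qed
  have stab: "(\<Sum>k\<in>UNIV. rho$k * w k * (\<Sum>l\<in>UNIV. S$k$l * rho$l * w l))
       \<le> (\<Sum>k\<in>UNIV. rho$k * (1 / (r k)^2) * (w k)^2)" for w :: "'k \<Rightarrow> real"
  proof -
    let ?C = "(\<Sum>k\<in>UNIV. rho$k * w k * (\<Sum>l\<in>UNIV. S$k$l * rho$l * w l))"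
    let ?f = "\<lambda>z. (\<Sum>k\<in>UNIV. rho$k * (1 / (cmod (g z $ k))^2) * (w k)^2)"
    have lim: "(?f \<longlongrightarrow> (\<Sum>k\<in>UNIV. rho$k * (1 / (cmod (g1 $ k))^2) * (w k)^2)) F"
      by (intro tendsto_intros gk) (use nz1 in simp)
    have ev: "eventually (\<lambda>z. ?C \<le> ?f z) F"
    proof (rule eventually_mono[OF evH])
      fix z :: complex assume z: "Im z < 0"
      then have gs: "\<forall>k. 0 < Im (g z $ k)" "QVE rho S z (g z)" using g_sol by blast+
      show "?C \<le> ?f z"
      proof (rule amgm_form[OF S_sym S_nn rho_nn])
        show "0 < Im (g z $ k)" for k using gs by blast
        show "(\<Sum>l\<in>UNIV. S$k$l * rho$l * Im (g z $ l)) \<le> 1 / (cmod (g z $ k))^2 * Im (g z $ k)" for k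
          using qve_parts(2)[OF gs(2), of k] z by simp
      qed
    qed
    have "?C \<le> (\<Sum>k\<in>UNIV. rho$k * (1 / (cmod (g1 $ k))^2) * (w k)^2)"
      by (rule tendsto_le[OF Fnt lim tendsto_const ev])
    also have "\<dots> = (\<Sum>k\<in>UNIV. rho$k * (1 / (r k)^2) * (w k)^2)"
      using nr unfolding n_def by simp
    finally show ?thesis .
  qed
  have qnn: "0 \<le> q k" for k
  proof (rule ccontr)
    assume neg: "\<not> 0 \<le> q k"
    define w where "w = (\<lambda>k. min (q k) 0)"
    have per: "(w j)^2 / r j \<le> w j * (\<Sum>l\<in>UNIV. S$j$l * rho$l * w l)" for j
    proof -
      have gen: "\<And>X Y D (c::real). X = Y + D \<Longrightarrow> 0 \<le> D \<Longrightarrow> c \<le> 0 \<Longrightarrow> c*X \<le> c*Y"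
        by (simp add: distrib_left mult_nonpos_nonneg)
      have "(\<Sum>l\<in>UNIV. S$j$l * rho$l * q l)
          = (\<Sum>l\<in>UNIV. S$j$l * rho$l * w l) + (\<Sum>l\<in>UNIV. S$j$l * rho$l * (q l - w l))"
        by (simp add: sum.distrib[symmetric] algebra_simps)
      moreover have "0 \<le> (\<Sum>l\<in>UNIV. S$j$l * rho$l * (q l - w l))"
        using S_nn rho_nn unfolding w_def by (intro sum_nonneg mult_nonneg_nonneg) auto
      moreover have "w j \<le> 0" unfolding w_def by simp
      ultimately have "w j * (\<Sum>l\<in>UNIV. S$j$l * rho$l * q l) \<le> w j * (\<Sum>l\<in>UNIV. S$j$l * rho$l * w l)"
        by (rule gen)
      moreover have "w j * (\<Sum>l\<in>UNIV. S$j$l * rho$l * q l) = (w j)^2 / r j"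
        unfolding Gq w_def by (cases "q j \<le> 0") (auto simp: power2_eq_square min_def)
      ultimately show ?thesis by simp
    qed
    have per2: "rho$j * (1 / (r j)^2) * (w j)^2 \<le> rho$j * ((w j)^2 / r j)" for j
    proof (cases "q j < 0")
      case True
      then have "1 < r j" unfolding q_def by simp
      then have "1 / (r j)^2 \<le> 1 / r j"
        by (simp add: divide_simps power2_eq_square)
      then have "(w j)^2 / (r j)^2 \<le> (w j)^2 / r j"
        by (metis divide_inverse inverse_eq_divide mult_left_mono zero_le_power2)
      then have "rho$j * ((w j)^2 / (r j)^2) \<le> rho$j * ((w j)^2 / r j)"
        by (rule mult_left_mono) (rule rho_nn)
      then show ?thesis by simp
    next
      case False then show ?thesis unfolding w_def by simp
    qed
    have strict: "rho$k * (1 / (r k)^2) * (w k)^2 < rho$k * ((w k)^2 / r k)"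
    proof -
      have "1 < r k" "w k = q k" using neg unfolding q_def w_def by auto
      then have "1 / (r k)^2 < 1 / r k" by (simp add: divide_simps power2_eq_square)
      moreover have "0 < (w k)^2" using neg \<open>w k = q k\<close> by simp
      ultimately have "(w k)^2 * (1 / (r k)^2) < (w k)^2 * (1 / r k)"
        by (rule mult_strict_left_mono)
      then have "rho$k * ((w k)^2 * (1 / (r k)^2)) < rho$k * ((w k)^2 * (1 / r k))"
        by (rule mult_strict_left_mono) (rule rho_pos)
      then show ?thesis by simp
    qed
    have "(\<Sum>j\<in>UNIV. rho$j * (1 / (r j)^2) * (w j)^2) < (\<Sum>j\<in>UNIV. rho$j * ((w j)^2 / r j))"
      by (rule sum_strict_mono_ex1) (use per2 strict in auto)
    also have "\<dots> \<le> (\<Sum>j\<in>UNIV. rho$j * w j * (\<Sum>l\<in>UNIV. S$j$l * rho$l * w l))"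
    proof (intro sum_mono)
      fix j
      have "rho$j * ((w j)^2 / r j) \<le> rho$j * (w j * (\<Sum>l\<in>UNIV. S$j$l * rho$l * w l))"
        by (rule mult_left_mono[OF per rho_nn])
      then show "rho$j * ((w j)^2 / r j) \<le> rho$j * w j * (\<Sum>l\<in>UNIV. S$j$l * rho$l * w l)"
        by (simp add: mult.assoc)
    qed
    also have "\<dots> \<le> (\<Sum>j\<in>UNIV. rho$j * (1 / (r j)^2) * (w j)^2)" by (rule stab)
    finally show False by simp
  qed
  show ?thesis
  proof (cases "\<forall>k. q k = 0")
    case True
    then have r1: "r k = 1" for k unfolding q_def by (metis eq_iff_diff_eq_0)
    obtain v l where v: "v \<noteq> 0" "Omega_mat rho S *v v = l *\<^sub>R v" "l > 1"
      using eig_gt1[OF rho_pos S_sym S_pos lam] by blast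
    define w where "w = (\<lambda>k. v$k / sqrt (rho$k))"
    have "(\<Sum>k\<in>UNIV. rho$k * w k * (\<Sum>l\<in>UNIV. S$k$l * rho$l * w l))
        = (\<Sum>k\<in>UNIV. v$k * (Omega_mat rho S *v v) $ k)"
    proof (intro sum.cong refl)
      fix k
      have "(\<Sum>l\<in>UNIV. S$k$l * rho$l * w l) = (\<Sum>l\<in>UNIV. S$k$l * (sqrt (rho$l) * v$l))"
        unfolding w_def
      proof (intro sum.cong refl)
        fix l
        show "S$k$l * rho$l * (v$l / sqrt (rho$l)) = S$k$l * (sqrt (rho$l) * v$l)"
          using sqrt_cancel[OF rho_pos[of l], of "v$l"] by (simp only: mult.assoc)
      qed
      then show "rho$k * w k * (\<Sum>l\<in>UNIV. S$k$l * rho$l * w l) = v$k * (Omega_mat rho S *v v) $ k"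
        using sqrt_cancel[OF rho_pos[of k], of "v$k"]
        by (simp add: w_def Omega_mat_def matrix_vector_mult_def sum_distrib_left mult_ac)
    qed
    also have "\<dots> = l * (\<Sum>k\<in>UNIV. (v$k)^2)"
      using v(2) by (simp add: sum_distrib_left power2_eq_square mult_ac)
    finally have lhs: "(\<Sum>k\<in>UNIV. rho$k * w k * (\<Sum>l\<in>UNIV. S$k$l * rho$l * w l)) = l * (\<Sum>k\<in>UNIV. (v$k)^2)" .
    have rhs: "(\<Sum>k\<in>UNIV. rho$k * (1 / (r k)^2) * (w k)^2) = (\<Sum>k\<in>UNIV. (v$k)^2)"
    proof (intro sum.cong refl)
      fix k
      have "(sqrt (rho$k))^2 = rho$k" using rho_nn[of k] by simp
      then show "rho$k * (1 / (r k)^2) * (w k)^2 = (v$k)^2"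
        using rho_pos[of k] by (simp add: r1 w_def power_divide)
    qed
    have pos: "0 < (\<Sum>k\<in>UNIV. (v$k)^2)"
    proof -
      obtain j where "v$j \<noteq> 0" using v(1) by (metis vec_eq_iff zero_index)
      then have "0 < (v$j)^2" by simp
      also have "\<dots> \<le> (\<Sum>k\<in>UNIV. (v$k)^2)" by (rule member_le_sum) auto
      finally show ?thesis .
    qed
    have "l * (\<Sum>k\<in>UNIV. (v$k)^2) \<le> 1 * (\<Sum>k\<in>UNIV. (v$k)^2)" using stab[of w] lhs rhs by simp
    then have "l \<le> 1" using pos by (simp add: mult_le_cancel_right)
    then show ?thesis using v(3) by simp
  next
    case False
    then obtain j where j: "q j \<noteq> 0" by blast
    then have qj: "0 < q j" using qnn[of j] by simp
    show ?thesis
    proof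
      fix k
      have "0 < S$k$j * rho$j * q j" using S_pos rho_pos qj by simp
      also have "\<dots> \<le> (\<Sum>l\<in>UNIV. S$k$l * rho$l * q l)"
        by (rule member_le_sum) (use S_nn rho_nn qnn in auto)
      finally have "0 < q k / r k" using Gq by simp
      then have "q k \<noteq> 0" by auto
      then have "0 < q k" using qnn[of k] by simp
      with \<open>0 < q k / r k\<close> have "0 < r k" by (simp add: zero_less_divide_iff)
      moreover have "r k < 1" using \<open>0 < q k\<close> unfolding q_def by simp
      moreover have "Im (g1$k) = 0" using b0 unfolding b_def by simp
      ultimately show "Im (g1 $ k) = 0 \<and> 0 < Re (g1 $ k) \<and> Re (g1 $ k) < 1"
        unfolding r_def a_def by simp
    qed
  qed
qed

end
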